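(* Let $U$ be a unitary representation of the translation group $\mathbb R^{d+1}$ on $\mathcal H$ with spectrum in the closed forward light cone, write $U(x_0,x_1)=U(x_0,x_1,0,\dots,0)$, and let $P$ be the generator with $U(t,0)=e^{itP}$. Fix $a,b\in\mathbb R$ and set $\lambda(s)=\big((b-a)\sinh2\pi s,\,(a-b)\cosh2\pi s+b-a\big)$. If $\Phi\in\mathcal H$ has finite energy, i.e. $\Phi\in D(P^{1/2})$, then $s\mapsto(\Phi,U(\lambda(s))\Phi)$ is differentiable at $s=0$ with $$-i\frac{d}{ds}\Big|_{s=0}(\Phi,U(\lambda(s))\Phi)=2\pi(b-a)(\Phi,P\Phi).$$ Moreover, if $\Phi\in D(P)$, then $-i\lim_{s\to0}\frac{U(\lambda(s))\Phi-\Phi}{s}=2\pi(b-a)P\Phi$ in norm. *)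

theory Defs
  imports "HOL-Analysis.Analysis"
begin

text \<open>Complex Hilbert space structure on a real Banach space 'h: a complex scalar
multiplication sc extending scaleR, and an inner product ip that is antilinear in
the first and linear in the second argument (physics convention), with
ip x x = norm x squared.  Completeness comes from the class banach.\<close>

definition complex_hilbert ::
  "(complex \<Rightarrow> 'h::{real_normed_vector,banach} \<Rightarrow> 'h) \<Rightarrow> ('h \<Rightarrow> 'h \<Rightarrow> complex) \<Rightarrow> bool" where
  "complex_hilbert sc ip \<longleftrightarrow>
     (\<forall>r x. sc (complex_of_real r) x = r *\<^sub>R x) \<and>
     (\<forall>c d x. sc (c * d) x = sc c (sc d x)) \<and>
     (\<forall>c x y. sc c (x + y) = sc c x + sc c y) \<and>
     (\<forall>c d x. sc (c + d) x = sc c x + sc d x) \<and>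
     (\<forall>c x. norm (sc c x) = norm c * norm x) \<and>
     (\<forall>x y z. ip x (y + z) = ip x y + ip x z) \<and>
     (\<forall>c x y. ip x (sc c y) = c * ip x y) \<and>
     (\<forall>x y. ip y x = cnj (ip x y)) \<and>
     (\<forall>x. ip x x = complex_of_real ((norm x)\<^sup>2))"

text \<open>Strongly continuous unitary representation of the translation group
R^(d+1) = real \<times> 'v (time \<times> space, 'v a Euclidean space of dimension d).\<close>

definition unitary_rep ::
  "(complex \<Rightarrow> 'h::{real_normed_vector,banach} \<Rightarrow> 'h) \<Rightarrow> ('h \<Rightarrow> 'h \<Rightarrow> complex) \<Rightarrow>
   (real \<times> 'v::euclidean_space \<Rightarrow> 'h \<Rightarrow> 'h) \<Rightarrow> bool" where
  "unitary_rep sc ip U \<longleftrightarrow>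
     (\<forall>x. (\<forall>\<phi> \<psi>. U x (\<phi> + \<psi>) = U x \<phi> + U x \<psi>) \<and> (\<forall>c \<phi>. U x (sc c \<phi>) = sc c (U x \<phi>))) \<and>
     (\<forall>x \<phi> \<psi>. ip (U x \<phi>) (U x \<psi>) = ip \<phi> \<psi>) \<and>
     (\<forall>x. surj (U x)) \<and>
     (\<forall>\<phi>. U 0 \<phi> = \<phi>) \<and>
     (\<forall>x y \<phi>. U (x + y) \<phi> = U x (U y \<phi>)) \<and>
     (\<forall>\<phi>. continuous_on UNIV (\<lambda>x. U x \<phi>))"

definition mink :: "real \<times> 'v::euclidean_space \<Rightarrow> real \<times> 'v \<Rightarrow> real" where
  "mink p x = fst p * fst x - snd p \<bullet> snd x"

definition forward_cone :: "(real \<times> 'v::euclidean_space) set" where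
  "forward_cone = {p. norm (snd p) \<le> fst p}"

text \<open>mu is the spectral measure of phi: the finite Borel measure (Phi, E(.) Phi) on
momentum space with (Phi, U(x) Phi) = integral of exp(i p.x) d mu(p).\<close>

definition spectral_measure_of ::
  "('h::{real_normed_vector,banach} \<Rightarrow> 'h \<Rightarrow> complex) \<Rightarrow> (real \<times> 'v::euclidean_space \<Rightarrow> 'h \<Rightarrow> 'h) \<Rightarrow>
   'h \<Rightarrow> (real \<times> 'v) measure \<Rightarrow> bool" where
  "spectral_measure_of ip U \<phi> \<mu> \<longleftrightarrow>
     finite_measure \<mu> \<and> sets \<mu> = sets borel \<and>
     (\<forall>x. ip \<phi> (U x \<phi>) = (\<integral>p. cis (mink p x) \<partial>\<mu>))"

text \<open>Spectrum of U contained in the closed forward light cone: every spectral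
measure (Phi, E(.) Phi) exists and is concentrated on the cone.\<close>

definition spectrum_in_forward_cone ::
  "('h::{real_normed_vector,banach} \<Rightarrow> 'h \<Rightarrow> complex) \<Rightarrow> (real \<times> 'v::euclidean_space \<Rightarrow> 'h \<Rightarrow> 'h) \<Rightarrow> bool" where
  "spectrum_in_forward_cone ip U \<longleftrightarrow>
     (\<forall>\<phi>. \<exists>\<mu>. spectral_measure_of ip U \<phi> \<mu> \<and> emeasure \<mu> (UNIV - forward_cone) = 0)"

text \<open>Generator P of t \<mapsto> U(t,0) = exp(itP): Phi \<in> D(P) with P Phi = psi
iff (U(t,0) Phi - Phi)/t \<rightarrow> i psi in norm.\<close>

definition generator_value ::
  "(complex \<Rightarrow> 'h::{real_normed_vector,banach} \<Rightarrow> 'h) \<Rightarrow> (real \<times> 'v::euclidean_space \<Rightarrow> 'h \<Rightarrow> 'h) \<Rightarrow>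
   'h \<Rightarrow> 'h \<Rightarrow> bool" where
  "generator_value sc U \<phi> \<psi> \<longleftrightarrow>
     ((\<lambda>t. inverse t *\<^sub>R (U (t, 0) \<phi> - \<phi>)) \<longlongrightarrow> sc \<i> \<psi>) (at 0)"

definition U2 :: "(real \<times> 'v::euclidean_space \<Rightarrow> 'h \<Rightarrow> 'h) \<Rightarrow> 'v \<Rightarrow> real \<Rightarrow> real \<Rightarrow> 'h \<Rightarrow> 'h" where
  "U2 U e x0 x1 = U (x0, x1 *\<^sub>R e)"

definition lam :: "real \<Rightarrow> real \<Rightarrow> real \<Rightarrow> real \<times> real" where
  "lam a b s = ((b - a) * sinh (2 * pi * s), (a - b) * cosh (2 * pi * s) + b - a)"

end

theory Submission
  imports Defs "HOL-Probability.Probability"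
begin

lemma cos_ineq: "2 - 2 * cos (u::real) \<le> u^2"
proof -
  have "cos u = cos (2 * (u/2))" by simp
  also have "\<dots> = 1 - 2 * (sin (u/2))^2" by (rule cos_double_sin)
  finally have c: "2 - 2 * cos u = 4 * (sin (u/2))^2" by simp
  have "\<bar>sin (u/2)\<bar> \<le> \<bar>u/2\<bar>" by (rule abs_sin_x_le_abs_x)
  then have "(sin (u/2))^2 \<le> (u/2)^2"
    by (metis abs_ge_zero power2_abs power_mono)
  then show ?thesis using c by (simp add: power_divide)
qed

lemma cis_minus_one_bound: "cmod (cis u - 1) \<le> \<bar>u\<bar>"
proof -
  have "(cmod (cis u - 1))^2 = (cos u - 1)^2 + (sin u)^2"
    by (simp add: cmod_power2)
  also have "\<dots> = 2 - 2 * cos u"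
    using sin_cos_squared_add[of u] by (simp add: power2_eq_square algebra_simps)
  also have "\<dots> \<le> \<bar>u\<bar>^2" using cos_ineq[of u] by simp
  finally show ?thesis
    using abs_ge_zero norm_ge_zero power2_le_imp_le by blast
qed

lemma vd_from_quot:
  fixes f :: "real \<Rightarrow> complex"
  assumes "((\<lambda>y. inverse y *\<^sub>R (f y - f 0)) \<longlongrightarrow> D) (at 0)"
  shows "(f has_vector_derivative D) (at 0)"
proof -
  have r: "((\<lambda>y. Re (inverse y *\<^sub>R (f y - f 0))) \<longlongrightarrow> Re D) (at 0)"
    using tendsto_Re[OF assms] .
  have i: "((\<lambda>y. Im (inverse y *\<^sub>R (f y - f 0))) \<longlongrightarrow> Im D) (at 0)"
    using tendsto_Im[OF assms] .
  show ?thesis unfolding has_vector_derivative_complex_iff has_field_derivative_iff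
    using r i by (simp add: divide_inverse mult.commute)
qed

lemma dc_at0:
  fixes s :: "real \<Rightarrow> 'a \<Rightarrow> 'b::{banach, second_countable_topology}"
  assumes "f \<in> borel_measurable M" "\<And>t. s t \<in> borel_measurable M" "integrable M w"
    and lim: "AE x in M. ((\<lambda>t. s t x) \<longlongrightarrow> f x) (at 0)"
    and bound: "\<forall>\<^sub>F t in at 0. AE x in M. norm (s t x) \<le> w x"
  shows "((\<lambda>t. integral\<^sup>L M (s t)) \<longlongrightarrow> integral\<^sup>L M f) (at 0)"
proof (subst tendsto_at_iff_sequentially, intro allI impI)
  fix X :: "nat \<Rightarrow> real" assume X1: "\<forall>i. X i \<in> UNIV - {0}" and X2: "X \<longlonglongrightarrow> 0"
  have XF: "filterlim X (at 0) sequentially"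
    using X1 X2 by (auto simp: filterlim_at)
  from filterlim_iff[THEN iffD1, OF XF, rule_format, OF bound]
  obtain N where w: "\<And>n. N \<le> n \<Longrightarrow> AE x in M. norm (s (X n) x) \<le> w x"
    by (auto simp: eventually_sequentially)
  show "((\<lambda>t. integral\<^sup>L M (s t)) \<circ> X) \<longlonglongrightarrow> integral\<^sup>L M f"
    unfolding comp_def
  proof (rule LIMSEQ_offset, rule integral_dominated_convergence)
    show "AE x in M. norm (s (X (n + N)) x) \<le> w x" for n
      by (rule w) auto
    show "AE x in M. (\<lambda>n. s (X (n + N)) x) \<longlonglongrightarrow> f x"
      using lim
    proof eventually_elim
      fix x assume "((\<lambda>i. s i x) \<longlongrightarrow> f x) (at 0)"
      then show "(\<lambda>n. s (X (n + N)) x) \<longlonglongrightarrow> f x"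
        by (intro LIMSEQ_ignore_initial_segment filterlim_compose[OF _ XF])
    qed
  qed (use assms in auto)
qed


lemma ch_ip_minus:
  assumes "complex_hilbert sc ip"
  shows "ip x (y - z) = ip x y - ip x z"
proof -
  have "ip x y = ip x ((y - z) + z)" by simp
  also have "\<dots> = ip x (y - z) + ip x z" using assms unfolding complex_hilbert_def by blast
  finally show ?thesis by simp
qed

lemma ch_ip_minus_left:
  assumes "complex_hilbert sc ip"
  shows "ip (y - z) x = ip y x - ip z x"
proof -
  have c: "\<And>a b. ip a b = cnj (ip b a)" using assms unfolding complex_hilbert_def by blast
  show ?thesis using ch_ip_minus[OF assms, of x y z] c[of "y - z" x] c[of y x] c[of z x]
    by simp
qed

lemma ch_norm_sq:
  assumes "complex_hilbert sc ip"
  shows "(norm x)^2 = Re (ip x x)"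
proof -
  have "ip x x = complex_of_real ((norm x)^2)" using assms unfolding complex_hilbert_def by blast
  then show ?thesis by simp
qed

lemma ur_diff:
  assumes "unitary_rep sc ip U"
  shows "U x (a - b) = U x a - U x b"
proof -
  have "U x a = U x ((a - b) + b)" by simp
  also have "\<dots> = U x (a - b) + U x b" using assms unfolding unitary_rep_def by blast
  finally show ?thesis by simp
qed

lemma ur_norm:
  assumes "complex_hilbert sc ip" "unitary_rep sc ip U"
  shows "norm (U x a) = norm a"
proof -
  have "ip (U x a) (U x a) = ip a a" using assms(2) unfolding unitary_rep_def by blast
  then have "(norm (U x a))^2 = (norm a)^2"
    using ch_norm_sq[OF assms(1), of a] ch_norm_sq[OF assms(1), of "U x a"] by simp
  then show ?thesis by (simp add: power2_eq_iff_nonneg)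
qed

lemma mink_cont: "continuous_on UNIV (\<lambda>p. mink p x)"
  unfolding mink_def by (intro continuous_intros)

lemma cont_meas:
  assumes "sets \<mu> = sets borel" "continuous_on UNIV f"
  shows "f \<in> borel_measurable \<mu>"
  using borel_measurable_continuous_onI[OF assms(2)] measurable_cong_sets[OF assms(1) refl] by blast

lemma mink_meas:
  assumes "sets \<mu> = sets borel"
  shows "(\<lambda>p. mink p x) \<in> borel_measurable \<mu>"
  by (rule cont_meas[OF assms mink_cont])

lemma cis_mink_meas:
  assumes "sets \<mu> = sets borel"
  shows "(\<lambda>p. cis (mink p x)) \<in> borel_measurable \<mu>"
  by (rule cont_meas[OF assms]) (intro continuous_intros mink_cont)

lemma cos_mink_meas:
  assumes "sets \<mu> = sets borel"
  shows "(\<lambda>p. cos (mink p x)) \<in> borel_measurable \<mu>"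
  by (rule cont_meas[OF assms]) (intro continuous_intros mink_cont)

lemma mink_zero[simp]: "mink p 0 = 0"
  by (simp add: mink_def)

lemma key_norm:
  assumes ch: "complex_hilbert sc ip" and ur: "unitary_rep sc ip U"
    and sm: "spectral_measure_of ip U \<phi> \<mu>"
  shows "(norm (U x \<phi> - \<phi>))^2 = (\<integral>p. 2 - 2 * cos (mink p x) \<partial>\<mu>)"
proof -
  have fm: "finite_measure \<mu>" and sb: "sets \<mu> = sets borel"
    and ipU: "\<And>x. ip \<phi> (U x \<phi>) = (\<integral>p. cis (mink p x) \<partial>\<mu>)"
    using sm unfolding spectral_measure_of_def by auto
  have intcis: "integrable \<mu> (\<lambda>p. cis (mink p y))" for y
    by (rule finite_measure.integrable_const_bound[OF fm, where B=1])
       (use cis_mink_meas[OF sb] in auto)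
  have intcos: "integrable \<mu> (\<lambda>p. cos (mink p y))" for y
    by (rule finite_measure.integrable_const_bound[OF fm, where B=1])
       (use cos_mink_meas[OF sb] in auto)
  have ReI: "Re (ip \<phi> (U y \<phi>)) = (\<integral>p. cos (mink p y) \<partial>\<mu>)" for y
    unfolding ipU using integral_Re[OF intcis[of y]] by simp
  have U0: "U 0 \<phi> = \<phi>" using ur unfolding unitary_rep_def by blast
  have uu: "ip (U x \<phi>) (U x \<phi>) = ip \<phi> \<phi>" using ur unfolding unitary_rep_def by blast
  have cj: "ip (U x \<phi>) \<phi> = cnj (ip \<phi> (U x \<phi>))" using ch unfolding complex_hilbert_def by blast
  have "(norm (U x \<phi> - \<phi>))^2 = Re (ip (U x \<phi> - \<phi>) (U x \<phi> - \<phi>))"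
    by (rule ch_norm_sq[OF ch])
  also have "\<dots> = 2 * Re (ip \<phi> (U 0 \<phi>)) - 2 * Re (ip \<phi> (U x \<phi>))"
    unfolding ch_ip_minus[OF ch] ch_ip_minus_left[OF ch] uu cj U0 by simp
  also have "\<dots> = 2 * (\<integral>p. 1 \<partial>\<mu>) - 2 * (\<integral>p. cos (mink p x) \<partial>\<mu>)"
    unfolding ReI by simp
  also have "\<dots> = (\<integral>p. 2 \<partial>\<mu>) - (\<integral>p. 2 * cos (mink p x) \<partial>\<mu>)"
    by simp
  also have "\<dots> = (\<integral>p. 2 - 2 * cos (mink p x) \<partial>\<mu>)"
    by (subst Bochner_Integration.integral_diff) (use intcos[of x] finite_measure.integrable_const[OF fm] in auto)
  finally show ?thesis .
qed


lemma cone_closed: "closed (forward_cone :: (real \<times> 'v::euclidean_space) set)"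
  unfolding forward_cone_def
  by (intro closed_Collect_le continuous_intros)

lemma AE_cone:
  assumes sb: "sets \<mu> = sets borel" and c: "emeasure \<mu> (UNIV - forward_cone) = 0"
  shows "AE p in \<mu>. p \<in> (forward_cone :: (real \<times> 'v::euclidean_space) set)"
proof (rule AE_I')
  have "UNIV - (forward_cone :: (real \<times> 'v) set) \<in> sets borel"
    by (intro borel_open open_Diff[OF open_UNIV cone_closed])
  then show "UNIV - (forward_cone :: (real \<times> 'v) set) \<in> null_sets \<mu>"
    using c sb by (intro null_setsI) auto
  show "{x \<in> space \<mu>. x \<notin> forward_cone} \<subseteq> UNIV - forward_cone" by auto
qed

lemma cone_inner:
  assumes "p \<in> forward_cone" 
  shows "\<bar>snd p \<bullet> v\<bar> \<le> \<bar>fst p\<bar> * norm v"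
proof -
  have "\<bar>snd p \<bullet> v\<bar> \<le> norm (snd p) * norm v" by (rule Cauchy_Schwarz_ineq2)
  also have "\<dots> \<le> \<bar>fst p\<bar> * norm v"
    using assms unfolding forward_cone_def by (intro mult_right_mono) auto
  finally show ?thesis .
qed

lemma quot_lim:
  fixes g :: "real \<Rightarrow> real"
  assumes "(g has_real_derivative D) (at 0)" "g 0 = 0"
  shows "((\<lambda>t. g t / t) \<longlongrightarrow> D) (at 0)"
  using assms unfolding has_field_derivative_iff by simp

definition x0f :: "real \<Rightarrow> real \<Rightarrow> real \<Rightarrow> real" where
  "x0f a b s = (b - a) * sinh (2 * pi * s)"
definition x1f :: "real \<Rightarrow> real \<Rightarrow> real \<Rightarrow> real" where
  "x1f a b s = (a - b) * cosh (2 * pi * s) + b - a"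

lemma lam_eq: "lam a b s = (x0f a b s, x1f a b s)"
  unfolding lam_def x0f_def x1f_def by simp

lemma x0_deriv: "(x0f a b has_real_derivative (2 * pi * (b - a))) (at 0)"
  unfolding x0f_def by (auto intro!: derivative_eq_intros)

lemma x1_deriv: "(x1f a b has_real_derivative 0) (at 0)"
  unfolding x1f_def by (auto intro!: derivative_eq_intros)

lemma x0_0[simp]: "x0f a b 0 = 0" by (simp add: x0f_def)
lemma x1_0[simp]: "x1f a b 0 = 0" by (simp add: x1f_def)

lemma x0_quot: "((\<lambda>t. x0f a b t / t) \<longlongrightarrow> 2 * pi * (b - a)) (at 0)"
  by (rule quot_lim[OF x0_deriv]) simp
lemma x1_quot: "((\<lambda>t. x1f a b t / t) \<longlongrightarrow> 0) (at 0)"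
  by (rule quot_lim[OF x1_deriv]) simp


lemma quot_limit_cis:
  fixes \<theta> :: "real \<Rightarrow> real"
  assumes d: "(\<theta> has_real_derivative D) (at 0)" and z: "\<theta> 0 = 0"
  shows "((\<lambda>t. inverse t *\<^sub>R (cis (\<theta> t) - 1)) \<longlongrightarrow> \<i> * complex_of_real D) (at 0)"
proof -
  have dc: "((\<lambda>t. cos (\<theta> t)) has_real_derivative (- sin (\<theta> 0) * D)) (at 0)"
    by (intro derivative_intros d)
  have ds: "((\<lambda>t. sin (\<theta> t)) has_real_derivative (cos (\<theta> 0) * D)) (at 0)"
    by (intro derivative_intros d)
  have r: "((\<lambda>t. (cos (\<theta> t) - 1) / t) \<longlongrightarrow> 0) (at 0)"
    using dc z unfolding has_field_derivative_iff by simp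
  have i: "((\<lambda>t. sin (\<theta> t) / t) \<longlongrightarrow> D) (at 0)"
    using ds z unfolding has_field_derivative_iff by simp
  show ?thesis unfolding tendsto_complex_iff
    using r i by (simp add: divide_inverse mult.commute cis.sel)
qed

lemma part1_core:
  fixes sc :: "complex \<Rightarrow> 'h::{real_normed_vector,banach} \<Rightarrow> 'h"
    and ip :: "'h \<Rightarrow> 'h \<Rightarrow> complex"
    and U :: "real \<times> 'v::euclidean_space \<Rightarrow> 'h \<Rightarrow> 'h"
  assumes ch: "complex_hilbert sc ip" and ur: "unitary_rep sc ip U"
    and sm: "spectral_measure_of ip U \<phi> \<mu>"
    and cone: "emeasure \<mu> (UNIV - forward_cone) = 0" and int: "integrable \<mu> fst"
    and eB: "e \<in> Basis"
  shows "((\<lambda>s. ip \<phi> (case lam a b s of (x0, x1) \<Rightarrow> U2 U e x0 x1 \<phi>)) has_vector_derivative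
           \<i> * complex_of_real (2 * pi * (b - a) * (\<integral>p. fst p \<partial>\<mu>))) (at 0)"
proof -
  have fm: "finite_measure \<mu>" and sb: "sets \<mu> = sets borel"
    and ipU: "\<And>x. ip \<phi> (U x \<phi>) = (\<integral>p. cis (mink p x) \<partial>\<mu>)"
    using sm unfolding spectral_measure_of_def by auto
  define \<theta> where "\<theta> p s = mink p (x0f a b s, x1f a b s *\<^sub>R e)" for p s
  have \<theta>eq: "\<theta> p s = fst p * x0f a b s - x1f a b s * (snd p \<bullet> e)" for p s
    by (simp add: \<theta>_def mink_def)
  define f where "f s = ip \<phi> (case lam a b s of (x0, x1) \<Rightarrow> U2 U e x0 x1 \<phi>)" for s
  have f_eq: "f s = (CLINT p|\<mu>. cis (\<theta> p s))" for s
    unfolding f_def lam_eq U2_def \<theta>_def by (simp add: ipU)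
  have \<theta>0: "\<theta> p 0 = 0" for p by (simp add: \<theta>eq)
  have contp: "continuous_on UNIV (\<lambda>p. \<theta> p s)" for s
    unfolding \<theta>eq by (intro continuous_intros)
  have intcis: "integrable \<mu> (\<lambda>p. cis (\<theta> p s))" for s
    by (rule finite_measure.integrable_const_bound[OF fm, where B=1])
       (use cont_meas[OF sb continuous_on_compose2[OF continuous_on_cis[OF continuous_on_id] contp]] in auto)
  have int1: "integrable \<mu> (\<lambda>p. (1::complex))" by (rule finite_measure.integrable_const[OF fm])
  have quot: "inverse s *\<^sub>R (f s - f 0) = (CLINT p|\<mu>. inverse s *\<^sub>R (cis (\<theta> p s) - 1))" for s
  proof -
    have "f s - f 0 = (CLINT p|\<mu>. cis (\<theta> p s) - 1)"
      unfolding f_eq \<theta>0 using intcis[of s] int1 by (simp add: Bochner_Integration.integral_diff)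
    then show ?thesis by simp
  qed
  define K where "K = 2 * pi * \<bar>b - a\<bar> + 2"
  define g where "g t p = inverse t *\<^sub>R (cis (\<theta> p t) - 1)" for t p
  define h where "h p = \<i> * complex_of_real (2 * pi * (b - a) * fst p)" for p :: "real \<times> 'v"
  have lim: "((\<lambda>t. g t p) \<longlongrightarrow> h p) (at 0)" for p
  proof -
    have d: "((\<lambda>s. fst p * x0f a b s - x1f a b s * (snd p \<bullet> e)) has_real_derivative
              fst p * (2 * pi * (b - a)) - 0 * (snd p \<bullet> e)) (at 0)"
      by (intro DERIV_diff DERIV_cmult[OF x0_deriv] DERIV_cmult_right[OF x1_deriv])
    have "((\<lambda>t. inverse t *\<^sub>R (cis (\<theta> p t) - 1)) \<longlongrightarrow> \<i> * complex_of_real (fst p * (2 * pi * (b - a)) - 0 * (snd p \<bullet> e))) (at 0)"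
      by (rule quot_limit_cis) (use d \<theta>0 in \<open>simp_all add: \<theta>eq[abs_def]\<close>)
    then show ?thesis unfolding g_def h_def by (simp add: mult_ac)
  qed
  have AEc: "AE p in \<mu>. p \<in> forward_cone" by (rule AE_cone[OF sb cone])
  have ev0: "\<forall>\<^sub>F t in at 0. \<bar>x0f a b t / t\<bar> < 2 * pi * \<bar>b - a\<bar> + 1"
    using order_tendstoD(2)[OF tendsto_rabs[OF x0_quot]] by (simp add: abs_mult)
  have ev1: "\<forall>\<^sub>F t in at 0. \<bar>x1f a b t / t\<bar> < 1"
    using order_tendstoD(2)[OF tendsto_rabs[OF x1_quot]] by simp
  have bound: "\<forall>\<^sub>F t in at 0. AE p in \<mu>. norm (g t p) \<le> K * \<bar>fst p\<bar>"
    using ev0 ev1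
  proof eventually_elim
    case (elim t)
    note tb = elim
    show ?case using AEc
    proof eventually_elim
      case (elim p)
      have ne: "norm e = 1" using eB by simp
      have ci: "\<bar>snd p \<bullet> e\<bar> \<le> \<bar>fst p\<bar>" using cone_inner[OF elim, of e] ne by simp
      have "norm (g t p) = \<bar>inverse t\<bar> * cmod (cis (\<theta> p t) - 1)" unfolding g_def by simp
      also have "\<dots> \<le> \<bar>inverse t\<bar> * \<bar>\<theta> p t\<bar>"
        by (intro mult_left_mono cis_minus_one_bound) simp
      also have "\<dots> \<le> \<bar>inverse t\<bar> * (\<bar>fst p\<bar> * \<bar>x0f a b t\<bar> + \<bar>x1f a b t\<bar> * \<bar>fst p\<bar>)"
      proof (intro mult_left_mono)
        have "\<bar>\<theta> p t\<bar> \<le> \<bar>fst p\<bar> * \<bar>x0f a b t\<bar> + \<bar>x1f a b t\<bar> * \<bar>snd p \<bullet> e\<bar>"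
          unfolding \<theta>eq by (simp add: abs_mult[symmetric] abs_triangle_ineq4)
        also have "\<dots> \<le> \<bar>fst p\<bar> * \<bar>x0f a b t\<bar> + \<bar>x1f a b t\<bar> * \<bar>fst p\<bar>"
          using ci by (intro add_left_mono mult_left_mono) auto
        finally show "\<bar>\<theta> p t\<bar> \<le> \<bar>fst p\<bar> * \<bar>x0f a b t\<bar> + \<bar>x1f a b t\<bar> * \<bar>fst p\<bar>" .
      qed simp
      also have "\<dots> = \<bar>fst p\<bar> * (\<bar>x0f a b t / t\<bar> + \<bar>x1f a b t / t\<bar>)"
        by (simp add: abs_mult divide_inverse algebra_simps)
      also have "\<dots> \<le> \<bar>fst p\<bar> * K"
        using tb unfolding K_def by (intro mult_left_mono) auto
      finally show ?case by (simp add: mult.commute)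
    qed
  qed
  have gm: "g t \<in> borel_measurable \<mu>" for t
    unfolding g_def
    by (rule cont_meas[OF sb]) (intro continuous_intros continuous_on_compose2[OF continuous_on_cis[OF continuous_on_id] contp] contp)
  have hm: "h \<in> borel_measurable \<mu>"
    unfolding h_def by (rule cont_meas[OF sb]) (intro continuous_intros)
  have intw: "integrable \<mu> (\<lambda>p. K * \<bar>fst p\<bar>)" using int by auto
  have dc: "((\<lambda>t. integral\<^sup>L \<mu> (g t)) \<longlongrightarrow> integral\<^sup>L \<mu> h) (at 0)"
    by (rule dc_at0[OF hm gm intw _ bound]) (use lim in auto)
  have ih: "integral\<^sup>L \<mu> h = \<i> * complex_of_real (2 * pi * (b - a) * (\<integral>p. fst p \<partial>\<mu>))"
    unfolding h_def by simp
  have "((\<lambda>s. inverse s *\<^sub>R (f s - f 0)) \<longlongrightarrow> \<i> * complex_of_real (2 * pi * (b - a) * (\<integral>p. fst p \<partial>\<mu>))) (at 0)"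
    using dc unfolding quot ih g_def .
  then have "(f has_vector_derivative \<i> * complex_of_real (2 * pi * (b - a) * (\<integral>p. fst p \<partial>\<mu>))) (at 0)"
    by (rule vd_from_quot)
  then show ?thesis unfolding f_def .
qed


lemma fst_meas:
  assumes "sets \<mu> = sets borel"
  shows "(fst :: real \<times> 'v::euclidean_space \<Rightarrow> real) \<in> borel_measurable \<mu>"
  by (rule cont_meas[OF assms]) (intro continuous_intros)

lemma char_distr_fst:
  assumes sm: "spectral_measure_of ip U \<phi> \<mu>"
  shows "char (distr \<mu> borel fst) t = ip \<phi> (U (t, 0) \<phi>)"
proof -
  have sb: "sets \<mu> = sets borel" and ipU: "\<And>x. ip \<phi> (U x \<phi>) = (\<integral>p. cis (mink p x) \<partial>\<mu>)"
    using sm unfolding spectral_measure_of_def by auto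
  have "char (distr \<mu> borel fst) t = (CLINT p|\<mu>. iexp (t * fst p))"
    unfolding char_def by (rule integral_distr[OF fst_meas[OF sb]]) (intro borel_measurable_continuous_onI continuous_intros)
  also have "\<dots> = (CLINT p|\<mu>. cis (mink p (t, 0)))"
    by (simp add: mink_def cis_conv_exp mult.commute)
  finally show ?thesis by (simp add: ipU)
qed

lemma fst_distr_unique:
  assumes sm1: "spectral_measure_of ip U \<phi> \<mu>1" and sm2: "spectral_measure_of ip U \<phi> \<mu>2"
  shows "distr \<mu>1 borel fst = distr \<mu>2 borel (fst :: real \<times> 'v::euclidean_space \<Rightarrow> real)"
proof -
  have fm1: "finite_measure \<mu>1" and sb1: "sets \<mu>1 = sets borel"
    using sm1 unfolding spectral_measure_of_def by auto
  have fm2: "finite_measure \<mu>2" and sb2: "sets \<mu>2 = sets borel"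
    using sm2 unfolding spectral_measure_of_def by auto
  define \<nu>1 where "\<nu>1 = distr \<mu>1 borel fst"
  define \<nu>2 where "\<nu>2 = distr \<mu>2 borel fst"
  have s1: "sets \<nu>1 = sets borel" and s2: "sets \<nu>2 = sets borel" unfolding \<nu>1_def \<nu>2_def by simp_all
  have sp1: "space \<nu>1 = UNIV" and sp2: "space \<nu>2 = UNIV" unfolding \<nu>1_def \<nu>2_def by simp_all
  have f1: "finite_measure \<nu>1" unfolding \<nu>1_def by (rule finite_measure.finite_measure_distr[OF fm1 fst_meas[OF sb1]])
  have f2: "finite_measure \<nu>2" unfolding \<nu>2_def by (rule finite_measure.finite_measure_distr[OF fm2 fst_meas[OF sb2]])
  have ch: "char \<nu>1 = char \<nu>2"
    unfolding \<nu>1_def \<nu>2_def by (rule ext) (simp add: char_distr_fst[OF sm1] char_distr_fst[OF sm2])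
  have "char \<nu>1 0 = complex_of_real (measure \<nu>1 UNIV)" unfolding char_def using sp1 by (simp add: scaleR_conv_of_real)
  moreover have "char \<nu>2 0 = complex_of_real (measure \<nu>2 UNIV)" unfolding char_def using sp2 by (simp add: scaleR_conv_of_real)
  ultimately have mm: "measure \<nu>1 UNIV = measure \<nu>2 UNIV" using ch by simp
  define c where "c = measure \<nu>1 UNIV"
  have e1: "emeasure \<nu>1 UNIV = ennreal c"
    unfolding c_def using finite_measure.emeasure_eq_measure[OF f1] by simp
  have e2: "emeasure \<nu>2 UNIV = ennreal c"
    unfolding c_def mm using finite_measure.emeasure_eq_measure[OF f2] by simp
  have eqA: "emeasure \<nu>1 A = emeasure \<nu>2 A" if A: "A \<in> sets borel" for A
  proof (cases "c = 0")
    case True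
    have "emeasure \<nu>1 A \<le> emeasure \<nu>1 UNIV" by (rule emeasure_mono) (use A s1 in auto)
    moreover have "emeasure \<nu>2 A \<le> emeasure \<nu>2 UNIV" by (rule emeasure_mono) (use A s2 in auto)
    ultimately show ?thesis using e1 e2 True by simp
  next
    case False
    then have cpos: "c > 0" unfolding c_def by (simp add: measure_nonneg order_le_neq_trans)
    define \<rho>1 where "\<rho>1 = density \<nu>1 (\<lambda>_. ennreal (1 / c))"
    define \<rho>2 where "\<rho>2 = density \<nu>2 (\<lambda>_. ennreal (1 / c))"
    have r1: "real_distribution \<rho>1"
    proof -
      have "prob_space \<rho>1"
      proof (rule prob_spaceI)
        have "emeasure \<rho>1 (space \<rho>1) = ennreal (1 / c) * emeasure \<nu>1 (space \<nu>1)"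
          unfolding \<rho>1_def by (simp add: emeasure_density_const)
        also have "\<dots> = ennreal (1 / c) * ennreal c" using e1 sp1 by simp
        also have "\<dots> = 1" using cpos by (simp add: ennreal_mult''[symmetric] del: ennreal_mult'')
        finally show "emeasure \<rho>1 (space \<rho>1) = 1" .
      qed
      then show ?thesis unfolding real_distribution_def real_distribution_axioms_def \<rho>1_def using s1 by simp
    qed
    have r2: "real_distribution \<rho>2"
    proof -
      have "prob_space \<rho>2"
      proof (rule prob_spaceI)
        have "emeasure \<rho>2 (space \<rho>2) = ennreal (1 / c) * emeasure \<nu>2 (space \<nu>2)"
          unfolding \<rho>2_def by (simp add: emeasure_density_const)
        also have "\<dots> = ennreal (1 / c) * ennreal c" using e2 sp2 by simp
        also have "\<dots> = 1" using cpos by (simp add: ennreal_mult''[symmetric] del: ennreal_mult'')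
        finally show "emeasure \<rho>2 (space \<rho>2) = 1" .
      qed
      then show ?thesis unfolding real_distribution_def real_distribution_axioms_def \<rho>2_def using s2 by simp
    qed
    have "char \<rho>1 t = char \<rho>2 t" for t
    proof -
      have "char \<rho>1 t = (CLINT x|\<nu>1. (1 / c) *\<^sub>R iexp (t * x))"
        unfolding char_def \<rho>1_def
        by (rule integral_density) (use s1 cpos in \<open>auto intro!: borel_measurable_continuous_onI continuous_intros simp: measurable_cong_sets[OF s1 refl]\<close>)
      also have "\<dots> = (1 / c) *\<^sub>R char \<nu>1 t" unfolding char_def by simp
      also have "\<dots> = (1 / c) *\<^sub>R char \<nu>2 t" using ch by simp
      also have "\<dots> = (CLINT x|\<nu>2. (1 / c) *\<^sub>R iexp (t * x))" unfolding char_def by simp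
      also have "\<dots> = char \<rho>2 t"
        unfolding char_def \<rho>2_def
        by (rule integral_density[symmetric]) (use s2 cpos in \<open>auto intro!: borel_measurable_continuous_onI continuous_intros simp: measurable_cong_sets[OF s2 refl]\<close>)
      finally show ?thesis .
    qed
    then have "\<rho>1 = \<rho>2" by (intro Levy_uniqueness r1 r2 ext)
    then have "ennreal (1 / c) * emeasure \<nu>1 A = ennreal (1 / c) * emeasure \<nu>2 A"
      unfolding \<rho>1_def \<rho>2_def using A s1 s2
      by (metis emeasure_density_const)
    then show ?thesis using cpos by (simp add: ennreal_mult_cancel_left)
  qed
  show ?thesis unfolding \<nu>1_def[symmetric] \<nu>2_def[symmetric]
    by (rule measure_eqI) (use s1 s2 eqA in auto)
qed


lemma cos_quot_lim: "((\<lambda>t. (2 - 2 * cos (c * t)) / t^2) \<longlongrightarrow> c^2) (at (0::real))" for c :: real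
proof -
  have d: "((\<lambda>t. sin (c * t / 2)) has_real_derivative (cos (c * 0 / 2) * (c / 2))) (at 0)"
    by (auto intro!: derivative_eq_intros)
  have q: "((\<lambda>t. sin (c * t / 2) / t) \<longlongrightarrow> c / 2) (at 0)"
    using quot_lim[OF d] by simp
  have q2: "((\<lambda>t. (2 * (sin (c * t / 2) / t))^2) \<longlongrightarrow> (2 * (c / 2))^2) (at 0)"
    by (intro tendsto_intros q)
  have eq: "(2 - 2 * cos (c * t)) / t^2 = (2 * (sin (c * t / 2) / t))^2" for t
  proof -
    have "cos (c * t) = cos (2 * (c * t / 2))" by simp
    also have "\<dots> = 1 - 2 * (sin (c * t / 2))^2" by (rule cos_double_sin)
    finally show ?thesis by (simp add: power_divide power_mult_distrib)
  qed
  show ?thesis using q2 unfolding eq by simp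
qed

lemma second_moment:
  fixes sc :: "complex \<Rightarrow> 'h::{real_normed_vector,banach} \<Rightarrow> 'h"
    and ip :: "'h \<Rightarrow> 'h \<Rightarrow> complex"
    and U :: "real \<times> 'v::euclidean_space \<Rightarrow> 'h \<Rightarrow> 'h"
  assumes ch: "complex_hilbert sc ip" and ur: "unitary_rep sc ip U"
    and sm: "spectral_measure_of ip U \<phi> \<mu>"
    and gv: "generator_value sc U \<phi> \<psi>"
  shows "(\<integral>\<^sup>+ p. ennreal ((fst p)^2) \<partial>\<mu>) \<le> ennreal ((norm \<psi>)^2)"
proof -
  have fm: "finite_measure \<mu>" and sb: "sets \<mu> = sets borel"
    using sm unfolding spectral_measure_of_def by auto
  define T where "T n = 1 / real (Suc n)" for n
  have Tne: "T n \<noteq> 0" for n unfolding T_def by simp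
  have T0: "T \<longlonglongrightarrow> 0" unfolding T_def by (rule LIMSEQ_inverse_real_of_nat[unfolded inverse_eq_divide])
  have TF: "filterlim T (at 0) sequentially" using T0 Tne by (auto simp: filterlim_at)
  define v where "v n p = (2 - 2 * cos (mink p (T n, 0))) / (T n)^2" for n and p :: "real \<times> 'v"
  have vm: "(\<lambda>p. v n p) \<in> borel_measurable \<mu>" for n
    unfolding v_def by (rule cont_meas[OF sb]) (intro continuous_intros mink_cont, simp add: Tne)
  have vnn: "0 \<le> v n p" for n p unfolding v_def by simp
  have vint: "integrable \<mu> (v n)" for n
  proof (rule finite_measure.integrable_const_bound[OF fm, where B="4 / (T n)^2"])
    show "v n \<in> borel_measurable \<mu>" using vm[of n] by (simp add: v_def[abs_def])
    have "(2 - 2 * cos (mink p (T n, 0))) / (T n)^2 \<le> 4 / (T n)^2" for p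
      using cos_ge_minus_one[of "mink p (T n, 0)"] by (intro divide_right_mono) (linarith, simp)
    then show "AE x in \<mu>. norm (v n x) \<le> 4 / (T n)^2" using vnn by (intro AE_I2) (simp add: v_def)
  qed
  have nv: "(\<integral>\<^sup>+ p. ennreal (v n p) \<partial>\<mu>) = ennreal ((norm (inverse (T n) *\<^sub>R (U (T n, 0) \<phi> - \<phi>)))^2)" for n
  proof -
    have "(\<integral>\<^sup>+ p. ennreal (v n p) \<partial>\<mu>) = ennreal (\<integral>p. v n p \<partial>\<mu>)"
      by (rule nn_integral_eq_integral[OF vint]) (simp add: vnn)
    also have "(\<integral>p. v n p \<partial>\<mu>) = (\<integral>p. 2 - 2 * cos (mink p (T n, 0)) \<partial>\<mu>) / (T n)^2"
      unfolding v_def by simp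
    also have "\<dots> = (norm (U (T n, 0) \<phi> - \<phi>))^2 / (T n)^2"
      by (simp add: key_norm[OF ch ur sm])
    also have "\<dots> = (norm (inverse (T n) *\<^sub>R (U (T n, 0) \<phi> - \<phi>)))^2"
      by (simp add: power_divide power_mult_distrib divide_inverse power_inverse)
    finally show ?thesis .
  qed
  have gl: "((\<lambda>t. inverse t *\<^sub>R (U (t, 0) \<phi> - \<phi>)) \<longlongrightarrow> sc \<i> \<psi>) (at 0)"
    using gv unfolding generator_value_def .
  have nsc: "norm (sc \<i> \<psi>) = norm \<psi>" using ch unfolding complex_hilbert_def by simp
  have lim1: "(\<lambda>n. (norm (inverse (T n) *\<^sub>R (U (T n, 0) \<phi> - \<phi>)))^2) \<longlonglongrightarrow> (norm \<psi>)^2"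
    unfolding nsc[symmetric]
    by (intro tendsto_intros filterlim_compose[OF gl TF])
  have lim1': "(\<lambda>n. \<integral>\<^sup>+ p. ennreal (v n p) \<partial>\<mu>) \<longlonglongrightarrow> ennreal ((norm \<psi>)^2)"
    unfolding nv by (intro tendsto_ennrealI lim1)
  have pw: "liminf (\<lambda>n. ennreal (v n p)) = ennreal ((fst p)^2)" for p
  proof -
    have "(\<lambda>n. v n p) \<longlonglongrightarrow> (fst p)^2"
      unfolding v_def mink_def
      using filterlim_compose[OF cos_quot_lim[of "fst p"] TF] by simp
    then have "(\<lambda>n. ennreal (v n p)) \<longlonglongrightarrow> ennreal ((fst p)^2)" by (rule tendsto_ennrealI)
    then show ?thesis by (simp add: lim_imp_Liminf)
  qed
  have "(\<integral>\<^sup>+ p. ennreal ((fst p)^2) \<partial>\<mu>) = (\<integral>\<^sup>+ p. liminf (\<lambda>n. ennreal (v n p)) \<partial>\<mu>)"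
    by (simp add: pw)
  also have "\<dots> \<le> liminf (\<lambda>n. \<integral>\<^sup>+ p. ennreal (v n p) \<partial>\<mu>)"
    by (rule nn_integral_liminf) (use vm in simp)
  also have "\<dots> = ennreal ((norm \<psi>)^2)"
    using lim1' by (simp add: lim_imp_Liminf)
  finally show ?thesis .
qed


lemma spatial_bound:
  fixes sc :: "complex \<Rightarrow> 'h::{real_normed_vector,banach} \<Rightarrow> 'h"
    and ip :: "'h \<Rightarrow> 'h \<Rightarrow> complex"
    and U :: "real \<times> 'v::euclidean_space \<Rightarrow> 'h \<Rightarrow> 'h"
  assumes ch: "complex_hilbert sc ip" and ur: "unitary_rep sc ip U"
    and sm: "spectral_measure_of ip U \<phi> \<mu>"
    and cone: "emeasure \<mu> (UNIV - forward_cone) = 0"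
    and gv: "generator_value sc U \<phi> \<psi>" and eB: "e \<in> Basis"
  shows "norm (U (0, y *\<^sub>R e) \<phi> - \<phi>) \<le> \<bar>y\<bar> * norm \<psi>"
proof -
  have fm: "finite_measure \<mu>" and sb: "sets \<mu> = sets borel"
    using sm unfolding spectral_measure_of_def by auto
  define f where "f p = 2 - 2 * cos (mink p (0, y *\<^sub>R e))" for p :: "real \<times> 'v"
  have fm': "f \<in> borel_measurable \<mu>"
    unfolding f_def by (rule cont_meas[OF sb]) (intro continuous_intros mink_cont)
  have fnn: "0 \<le> f p" for p unfolding f_def using cos_le_one[of "mink p (0, y *\<^sub>R e)"] by linarith
  have fint: "integrable \<mu> f"
  proof (rule finite_measure.integrable_const_bound[OF fm, where B=4])
    show "f \<in> borel_measurable \<mu>" by (rule fm')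
    show "AE x in \<mu>. norm (f x) \<le> 4"
    proof (intro AE_I2)
      fix p
      have "-1 \<le> cos (mink p (0, y *\<^sub>R e))" by (rule cos_ge_minus_one)
      then show "norm (f p) \<le> 4" using fnn[of p] unfolding f_def real_norm_def by arith
    qed
  qed
  have AEc: "AE p in \<mu>. p \<in> forward_cone" by (rule AE_cone[OF sb cone])
  have ne: "norm e = 1" using eB by simp
  have "ennreal ((norm (U (0, y *\<^sub>R e) \<phi> - \<phi>))^2) = ennreal (\<integral>p. f p \<partial>\<mu>)"
    unfolding key_norm[OF ch ur sm] f_def ..
  also have "\<dots> = (\<integral>\<^sup>+ p. ennreal (f p) \<partial>\<mu>)"
    by (rule nn_integral_eq_integral[OF fint, symmetric]) (simp add: fnn)
  also have "\<dots> \<le> (\<integral>\<^sup>+ p. ennreal (y^2) * ennreal ((fst p)^2) \<partial>\<mu>)"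
  proof (rule nn_integral_mono_AE)
    show "AE p in \<mu>. ennreal (f p) \<le> ennreal (y^2) * ennreal ((fst p)^2)"
      using AEc
    proof eventually_elim
      case (elim p)
      have "\<bar>mink p (0, y *\<^sub>R e)\<bar> = \<bar>snd p \<bullet> (y *\<^sub>R e)\<bar>" by (simp add: mink_def)
      also have "\<dots> \<le> \<bar>fst p\<bar> * norm (y *\<^sub>R e)" by (rule cone_inner[OF elim])
      also have "\<dots> = \<bar>fst p\<bar> * \<bar>y\<bar>" using ne by simp
      finally have m: "\<bar>mink p (0, y *\<^sub>R e)\<bar> \<le> \<bar>fst p\<bar> * \<bar>y\<bar>" .
      have "f p \<le> (mink p (0, y *\<^sub>R e))^2" unfolding f_def by (rule cos_ineq)
      also have "\<dots> = \<bar>mink p (0, y *\<^sub>R e)\<bar>^2" by simp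
      also have "\<dots> \<le> (\<bar>fst p\<bar> * \<bar>y\<bar>)^2" by (intro power_mono m) simp
      also have "\<dots> = y^2 * (fst p)^2" by (simp add: power_mult_distrib)
      finally show ?case by (simp add: ennreal_mult''[symmetric] del: ennreal_mult'')
    qed
  qed
  also have "\<dots> = ennreal (y^2) * (\<integral>\<^sup>+ p. ennreal ((fst p)^2) \<partial>\<mu>)"
    by (rule nn_integral_cmult) (intro measurable_compose[OF _ measurable_ennreal] cont_meas[OF sb] continuous_intros)
  also have "\<dots> \<le> ennreal (y^2) * ennreal ((norm \<psi>)^2)"
    by (intro mult_left_mono second_moment[OF ch ur sm gv]) simp
  also have "\<dots> = ennreal ((\<bar>y\<bar> * norm \<psi>)^2)"
    by (simp add: ennreal_mult''[symmetric] power_mult_distrib del: ennreal_mult'')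
  finally have "(norm (U (0, y *\<^sub>R e) \<phi> - \<phi>))^2 \<le> (\<bar>y\<bar> * norm \<psi>)^2"
    by (simp add: ennreal_le_iff)
  then show ?thesis by (rule power2_le_imp_le) simp
qed


lemma part2:
  fixes sc :: "complex \<Rightarrow> 'h::{real_normed_vector,banach} \<Rightarrow> 'h"
    and ip :: "'h \<Rightarrow> 'h \<Rightarrow> complex"
    and U :: "real \<times> 'v::euclidean_space \<Rightarrow> 'h \<Rightarrow> 'h"
  assumes ch: "complex_hilbert sc ip" and ur: "unitary_rep sc ip U"
    and sm: "spectral_measure_of ip U \<phi> \<mu>"
    and cone: "emeasure \<mu> (UNIV - forward_cone) = 0"
    and gv: "generator_value sc U \<phi> \<psi>" and eB: "e \<in> Basis"
  shows "((\<lambda>s. sc (- \<i>) (inverse s *\<^sub>R ((case lam a b s of (x0, x1) \<Rightarrow> U2 U e x0 x1 \<phi>) - \<phi>)))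
               \<longlongrightarrow> (2 * pi * (b - a)) *\<^sub>R \<psi>) (at 0)"
proof -
  have sc_real0: "\<forall>r x. sc (complex_of_real r) x = r *\<^sub>R x"
    using ch unfolding complex_hilbert_def by (elim conjE)
  have sc_mult0: "\<forall>c d x. sc (c * d) x = sc c (sc d x)"
    using ch unfolding complex_hilbert_def by (elim conjE)
  have sc_add0: "\<forall>c x y. sc c (x + y) = sc c x + sc c y"
    using ch unfolding complex_hilbert_def by (elim conjE)
  have sc_norm0: "\<forall>c x. norm (sc c x) = norm c * norm x"
    using ch unfolding complex_hilbert_def by (elim conjE)
  note sc_real = sc_real0[rule_format] and sc_mult = sc_mult0[rule_format]
    and sc_add = sc_add0[rule_format] and sc_norm = sc_norm0[rule_format]
  have sc_diff: "sc c (x - y) = sc c x - sc c y" for c x y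
    using sc_add[of c "x - y" y] by (simp add: algebra_simps)
  have U0: "U 0 x = x" for x using ur unfolding unitary_rep_def by blast
  have Uadd: "U (x + y) z = U x (U y z)" for x y z using ur unfolding unitary_rep_def by blast
  define r where "r = 2 * pi * (b - a)"
  define L where "L = r *\<^sub>R sc \<i> \<psi>"
  have tgt: "sc (- \<i>) L = r *\<^sub>R \<psi>"
  proof -
    have "sc (- \<i>) L = sc (- \<i>) (sc (complex_of_real r) (sc \<i> \<psi>))" unfolding L_def sc_real ..
    also have "\<dots> = sc (- \<i> * (complex_of_real r * \<i>)) \<psi>" by (simp only: sc_mult)
    also have "- \<i> * (complex_of_real r * \<i>) = complex_of_real r"
      by (simp add: algebra_simps)
    finally show ?thesis by (simp add: sc_real)
  qed
  define V where "V s = U (x0f a b s, x1f a b s *\<^sub>R e) \<phi>" for s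
  have Veq: "(case lam a b s of (x0, x1) \<Rightarrow> U2 U e x0 x1 \<phi>) = V s" for s
    unfolding lam_eq U2_def V_def by simp
  define In where "In s = inverse s *\<^sub>R (V s - \<phi>)" for s
  have InL: "(In \<longlongrightarrow> L) (at 0)"
  proof (cases "b = a")
    case True
    have "In = (\<lambda>_. 0)" unfolding In_def V_def using True by (simp add: x0f_def x1f_def U0 zero_prod_def[symmetric])
    moreover have "L = 0" unfolding L_def r_def using True by simp
    ultimately show ?thesis by simp
  next
    case False
    define W where "W s = U (0, x1f a b s *\<^sub>R e) \<phi> - \<phi>" for s
    define G where "G t = inverse t *\<^sub>R (U (t, 0) \<phi> - \<phi>)" for t
    define A where "A s = inverse s *\<^sub>R U (x0f a b s, 0) (W s)" for s
    have dec: "In s = A s + (x0f a b s / s) *\<^sub>R G (x0f a b s)" for s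
    proof -
      have "V s = U ((x0f a b s, 0) + (0, x1f a b s *\<^sub>R e)) \<phi>" unfolding V_def by simp
      also have "\<dots> = U (x0f a b s, 0) (U (0, x1f a b s *\<^sub>R e) \<phi>)" by (rule Uadd)
      finally have "V s - \<phi> = U (x0f a b s, 0) (W s) + (U (x0f a b s, 0) \<phi> - \<phi>)"
        unfolding W_def ur_diff[OF ur] by simp
      moreover have "inverse s *\<^sub>R (U (x0f a b s, 0) \<phi> - \<phi>) = (x0f a b s / s) *\<^sub>R G (x0f a b s)"
      proof (cases "x0f a b s = 0")
        case True
        then show ?thesis unfolding G_def by (simp add: U0 zero_prod_def[symmetric])
      next
        case False
        then show ?thesis unfolding G_def by (simp add: divide_inverse)
      qed
      ultimately show ?thesis unfolding In_def A_def by (simp only: scaleR_add_right)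
    qed
    have A0: "(A \<longlongrightarrow> 0) (at 0)"
    proof (rule Lim_null_comparison)
      show "\<forall>\<^sub>F s in at 0. norm (A s) \<le> \<bar>x1f a b s / s\<bar> * norm \<psi>"
      proof (intro always_eventually allI)
        fix s
        have "norm (A s) = \<bar>inverse s\<bar> * norm (W s)" unfolding A_def by (simp add: ur_norm[OF ch ur])
        also have "\<dots> \<le> \<bar>inverse s\<bar> * (\<bar>x1f a b s\<bar> * norm \<psi>)"
          unfolding W_def by (intro mult_left_mono spatial_bound[OF ch ur sm cone gv eB]) simp
        also have "\<dots> = \<bar>x1f a b s / s\<bar> * norm \<psi>" by (simp add: abs_mult divide_inverse mult_ac)
        finally show "norm (A s) \<le> \<bar>x1f a b s / s\<bar> * norm \<psi>" .
      qed
      show "((\<lambda>s. \<bar>x1f a b s / s\<bar> * norm \<psi>) \<longlongrightarrow> 0) (at 0)"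
        using tendsto_mult[OF tendsto_rabs_zero[OF x1_quot[of a b]] tendsto_const[of "norm \<psi>"]]
        by (simp only: mult_zero_left)
    qed
    have gl: "(G \<longlongrightarrow> sc \<i> \<psi>) (at 0)"
      using gv unfolding generator_value_def G_def[abs_def] .
    have x0c: "(x0f a b \<longlongrightarrow> 0) (at 0)"
      using DERIV_isCont[OF x0_deriv] unfolding isCont_def by simp
    have nz: "\<forall>\<^sub>F s in at (0::real). s \<noteq> 0" by (simp add: eventually_at_filter)
    have x0nz: "\<forall>\<^sub>F s in at (0::real). x0f a b s \<noteq> 0"
      using nz by eventually_elim (use False in \<open>simp add: x0f_def sinh_real_zero_iff\<close>)
    have X0F: "filterlim (x0f a b) (at 0) (at 0)"
      using x0c x0nz by (auto simp: filterlim_at)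
    have B: "((\<lambda>s. (x0f a b s / s) *\<^sub>R G (x0f a b s)) \<longlongrightarrow> L) (at 0)"
      unfolding L_def r_def by (intro tendsto_scaleR x0_quot filterlim_compose[OF gl X0F])
    show ?thesis unfolding dec[abs_def] using tendsto_add[OF A0 B] by simp
  qed
  have "((\<lambda>s. norm (In s - L)) \<longlongrightarrow> 0) (at 0)"
    using tendsto_norm_zero[OF LIM_zero[OF InL]] .
  moreover have "norm (sc (- \<i>) (In s) - r *\<^sub>R \<psi>) = norm (In s - L)" for s
    unfolding tgt[symmetric] sc_diff[symmetric] sc_norm by simp
  ultimately have "((\<lambda>s. norm (sc (- \<i>) (In s) - r *\<^sub>R \<psi>)) \<longlongrightarrow> 0) (at 0)"
    by (simp only:)
  then have "((\<lambda>s. sc (- \<i>) (In s) - r *\<^sub>R \<psi>) \<longlongrightarrow> 0) (at 0)"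
    by (rule tendsto_norm_zero_cancel)
  then have "((\<lambda>s. sc (- \<i>) (In s)) \<longlongrightarrow> r *\<^sub>R \<psi>) (at 0)" by (rule LIM_zero_cancel)
  then show ?thesis unfolding Veq In_def r_def .
qed

theorem lemma3p1:
  fixes sc :: "complex \<Rightarrow> 'h::{real_normed_vector,banach} \<Rightarrow> 'h"
    and ip :: "'h \<Rightarrow> 'h \<Rightarrow> complex"
    and U :: "real \<times> 'v::euclidean_space \<Rightarrow> 'h \<Rightarrow> 'h"
    and e :: 'v and a b :: real and \<phi> :: 'h
  assumes "complex_hilbert sc ip"
    and "unitary_rep sc ip U"
    and "spectrum_in_forward_cone ip U"
    and "e \<in> Basis"
  shows "(\<forall>\<mu>. spectral_measure_of ip U \<phi> \<mu> \<and> integrable \<mu> fst \<longrightarrow>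
            (\<exists>D. ((\<lambda>s. ip \<phi> (case lam a b s of (x0, x1) \<Rightarrow> U2 U e x0 x1 \<phi>)) has_vector_derivative D) (at 0)
                 \<and> - \<i> * D = complex_of_real (2 * pi * (b - a) * (\<integral>p. fst p \<partial>\<mu>))))
       \<and> (\<forall>\<psi>. generator_value sc U \<phi> \<psi> \<longrightarrow>
            ((\<lambda>s. sc (- \<i>) (inverse s *\<^sub>R ((case lam a b s of (x0, x1) \<Rightarrow> U2 U e x0 x1 \<phi>) - \<phi>)))
               \<longlongrightarrow> (2 * pi * (b - a)) *\<^sub>R \<psi>) (at 0))"
proof -
  note ch = assms(1) and ur = assms(2) and eB = assms(4)
  obtain \<mu>' where sm': "spectral_measure_of ip U \<phi> \<mu>'" and cone': "emeasure \<mu>' (UNIV - forward_cone) = 0"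
    using assms(3) unfolding spectrum_in_forward_cone_def by blast
  have sb': "sets \<mu>' = sets borel" using sm' unfolding spectral_measure_of_def by auto
  have P1: "\<exists>D. ((\<lambda>s. ip \<phi> (case lam a b s of (x0, x1) \<Rightarrow> U2 U e x0 x1 \<phi>)) has_vector_derivative D) (at 0)
                 \<and> - \<i> * D = complex_of_real (2 * pi * (b - a) * (\<integral>p. fst p \<partial>\<mu>))"
    if sm: "spectral_measure_of ip U \<phi> \<mu>" and int: "integrable \<mu> fst" for \<mu>
  proof -
    have sb: "sets \<mu> = sets borel" using sm unfolding spectral_measure_of_def by auto
    have fmb: "fst \<in> measurable \<mu> borel" using fst_meas[OF sb] .
    have fmb': "fst \<in> measurable \<mu>' borel" using fst_meas[OF sb'] .
    have de: "distr \<mu> borel fst = distr \<mu>' borel fst" by (rule fst_distr_unique[OF sm sm'])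
    have idm: "(\<lambda>x::real. x) \<in> borel_measurable borel" by simp
    have "integrable (distr \<mu> borel fst) (\<lambda>x::real. x)"
      using int integrable_distr_eq[OF fmb idm] by simp
    then have int': "integrable \<mu>' fst"
      unfolding de using integrable_distr_eq[OF fmb' idm] by simp
    have ie: "(\<integral>p. fst p \<partial>\<mu>) = (\<integral>p. fst p \<partial>\<mu>')"
      using integral_distr[OF fmb idm] integral_distr[OF fmb' idm] de by simp
    show ?thesis
      by (rule exI, rule conjI, rule part1_core[OF ch ur sm' cone' int' eB]) (simp add: ie)
  qed
  show ?thesis
    using P1 part2[OF ch ur sm' cone' _ eB] by blast
qed

end
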